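(* Let $G$ be an $n$-vertex graph, $k$ an integer, and $H\subseteq G$ a $k$-spanner of $G$ that contains a cycle. Let $C$ be any shortest cycle of $H$ and let $L_H$ be its length. If $2(n-k)\le L_H\le k+1$, then there exists an edge $e$ of $C$ such that $H\setminus\{e\}$ (the graph $H$ with edge $e$ removed) is still a $k$-spanner of $G$.
   Context: All graphs are undirected and unweighted. For a graph $G=(V,E)$ and integer $k$, a $k$-spanner of $G$ is a subgraph $H=(V,E')$, $E'\subseteq E$, with $\mathrm{dist}_H(u,v)\le k\cdot\mathrm{dist}_G(u,v)$ for all $u,v\in V$. *)

theory Defs
  imports Main "HOL-Library.Extended_Nat"
begin

definition graph :: "'a set \<Rightarrow> 'a set set \<Rightarrow> bool" where
  "graph V E \<longleftrightarrow> finite V \<and> (\<forall>e\<in>E. \<exists>u v. e = {u, v} \<and> u \<noteq> v \<and> u \<in> V \<and> v \<in> V)"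

definition walk :: "'a set set \<Rightarrow> 'a list \<Rightarrow> bool" where
  "walk E p \<longleftrightarrow> p \<noteq> [] \<and> (\<forall>i. Suc i < length p \<longrightarrow> {p ! i, p ! Suc i} \<in> E)"

definition gdist :: "'a set set \<Rightarrow> 'a \<Rightarrow> 'a \<Rightarrow> enat" where
  "gdist E u v = (INF p \<in> {p. walk E p \<and> hd p = u \<and> last p = v}. enat (length p - 1))"

definition is_spanner :: "'a set \<Rightarrow> 'a set set \<Rightarrow> 'a set set \<Rightarrow> nat \<Rightarrow> bool" where
  "is_spanner V E H k \<longleftrightarrow> H \<subseteq> E \<and>
     (\<forall>u\<in>V. \<forall>v\<in>V. gdist H u v \<le> enat k * gdist E u v)"

definition is_cycle :: "'a set \<Rightarrow> 'a set set \<Rightarrow> 'a list \<Rightarrow> bool" where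
  "is_cycle V E c \<longleftrightarrow> length c \<ge> 3 \<and> distinct c \<and> set c \<subseteq> V \<and>
     (\<forall>i < length c. {c ! i, c ! ((i + 1) mod length c)} \<in> E)"

definition cycle_edges :: "'a list \<Rightarrow> 'a set set" where
  "cycle_edges c = {{c ! i, c ! ((i + 1) mod length c)} | i. i < length c}"

end

theory Submission
  imports Defs
begin

lemma walk_single[simp]: "walk A [x]"
  by (simp add: walk_def)

lemma walk_Cons2: "walk A (x # y # p) \<longleftrightarrow> {x, y} \<in> A \<and> walk A (y # p)"
proof
  assume h: "walk A (x # y # p)"
  have "{x, y} \<in> A" using h unfolding walk_def by (metis Suc_less_eq length_Cons nth_Cons_0 nth_Cons_Suc zero_less_Suc)
  moreover have "walk A (y # p)" using h unfolding walk_def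
    by (metis (no_types, lifting) Suc_less_eq length_Cons list.distinct(1) nth_Cons_Suc)
  ultimately show "{x, y} \<in> A \<and> walk A (y # p)" by blast
next
  assume h: "{x, y} \<in> A \<and> walk A (y # p)"
  show "walk A (x # y # p)" unfolding walk_def
  proof (intro conjI allI impI)
    fix i assume "Suc i < length (x # y # p)"
    then show "{(x # y # p) ! i, (x # y # p) ! Suc i} \<in> A"
      using h unfolding walk_def by (cases i) auto
  qed simp
qed

lemma walk_mono: "walk A p \<Longrightarrow> A \<subseteq> B \<Longrightarrow> walk B p"
  unfolding walk_def by blast

lemma walk_take: "walk A p \<Longrightarrow> 0 < n \<Longrightarrow> walk A (take n p)"
  unfolding walk_def by auto

lemma walk_drop: "walk A p \<Longrightarrow> n < length p \<Longrightarrow> walk A (drop n p)"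
  unfolding walk_def by auto

lemma walk_rev: "walk A p \<Longrightarrow> walk A (rev p)"
  unfolding walk_def
proof (intro conjI allI impI)
  fix i assume h: "p \<noteq> [] \<and> (\<forall>i. Suc i < length p \<longrightarrow> {p ! i, p ! Suc i} \<in> A)"
    and i: "Suc i < length (rev p)"
  then have "{p ! (length p - Suc (Suc i)), p ! Suc (length p - Suc (Suc i))} \<in> A"
    by auto
  moreover have "Suc (length p - Suc (Suc i)) = length p - Suc i" using i by auto
  ultimately show "{rev p ! i, rev p ! Suc i} \<in> A" using i
    by (auto simp: rev_nth insert_commute)
qed auto

lemma walk_append:
  assumes "walk A p" "walk A q" "last p = hd q"
  shows "walk A (p @ tl q)"
  using assms
proof (induction p rule: induct_list012)
  case 1 then show ?case by (simp add: walk_def)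
next
  case (2 x) then show ?case by (cases q) auto
next
  case (3 x y zs)
  then have "walk A (y # zs @ tl q)" by (simp add: walk_Cons2)
  then show ?case using 3 by (simp add: walk_Cons2)
qed

lemma walk_nonempty: "walk A p \<Longrightarrow> p \<noteq> []"
  by (simp add: walk_def)

lemma gdist_le_walk:
  assumes "walk A p" "hd p = u" "last p = v"
  shows "gdist A u v \<le> enat (length p - 1)"
  unfolding gdist_def using assms by (auto intro!: INF_lower2)

lemma gdist_obtain:
  assumes "gdist A u v \<le> enat k"
  shows "\<exists>p. walk A p \<and> hd p = u \<and> last p = v \<and> length p - 1 \<le> k"
proof -
  let ?P = "{p. walk A p \<and> hd p = u \<and> last p = v}"
  let ?f = "\<lambda>p. enat (length p - 1)"
  have ne: "?P \<noteq> {}"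
  proof
    assume "?P = {}"
    then have "gdist A u v = \<infinity>" unfolding gdist_def by (simp only: \<open>?P = {}\<close>) (simp add: Inf_enat_def)
    then show False using assms by simp
  qed
  have "Inf (?f ` ?P) \<in> ?f ` ?P"
    unfolding Inf_enat_def using ne by (auto intro: LeastI)
  then obtain p where p: "p \<in> ?P" "?f p = gdist A u v" unfolding gdist_def by auto
  have "enat (length p - 1) \<le> enat k" using p(2) assms by simp
  then have "length p - 1 \<le> k" by simp
  then show ?thesis using p by blast
qed

lemma gdist_obtain_eq:
  assumes "gdist A u v \<noteq> \<infinity>"
  shows "\<exists>p. walk A p \<and> hd p = u \<and> last p = v \<and> gdist A u v = enat (length p - 1)"
proof -
  let ?P = "{p. walk A p \<and> hd p = u \<and> last p = v}"
  let ?f = "\<lambda>p. enat (length p - 1)"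
  have ne: "?P \<noteq> {}"
  proof
    assume "?P = {}"
    then have "gdist A u v = \<infinity>" unfolding gdist_def by (simp only: \<open>?P = {}\<close>) (simp add: Inf_enat_def)
    then show False using assms by simp
  qed
  have "Inf (?f ` ?P) \<in> ?f ` ?P"
    unfolding Inf_enat_def using ne by (auto intro: LeastI)
  then obtain p where "p \<in> ?P" "?f p = gdist A u v" unfolding gdist_def by auto
  then show ?thesis by auto
qed

lemma walk_distinct:
  assumes "walk A p"
  shows "\<exists>q. walk A q \<and> hd q = hd p \<and> last q = last p \<and> length q \<le> length p \<and> distinct q"
  using assms
proof (induction "length p" arbitrary: p rule: less_induct)
  case less
  show ?case
  proof (cases "distinct p")
    case True then show ?thesis using less.prems by blast
  next
    case False
    then obtain i j where ij: "i < j" "j < length p" "p ! i = p ! j"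
      by (metis distinct_conv_nth linorder_neqE_nat)
    define q where "q = take (Suc i) p @ tl (drop j p)"
    have w1: "walk A (take (Suc i) p)" using less.prems walk_take by blast
    have w2: "walk A (drop j p)" using less.prems walk_drop ij by blast
    have l1: "last (take (Suc i) p) = p ! i" using ij(1,2)
      by (simp add: take_Suc_conv_app_nth)
    have h2: "hd (drop j p) = p ! j" using ij by (simp add: hd_drop_conv_nth)
    have wq: "walk A q" unfolding q_def using walk_append[OF w1 w2] l1 h2 ij by simp
    have lq: "length q < length p" unfolding q_def using ij by auto
    have hq: "hd q = hd p" unfolding q_def using ij
      by (simp add: hd_append hd_conv_nth)
    have lastq: "last q = last p"
    proof (cases "Suc j < length p")
      case True
      then have "tl (drop j p) \<noteq> []" by (simp add: drop_Suc[symmetric] tl_drop)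
      then have "last q = last (tl (drop j p))" unfolding q_def by simp
      also have "\<dots> = last (drop j p)" using \<open>tl (drop j p) \<noteq> []\<close> by (simp add: last_tl)
      also have "\<dots> = last p" using ij(2) by (simp add: last_drop)
      finally show ?thesis .
    next
      case False
      then have "j = length p - 1" using ij by auto
      then have "tl (drop j p) = []" using ij by (simp add: tl_drop)
      then have "last q = p ! i" unfolding q_def using l1 by simp
      also have "\<dots> = p ! j" using ij(3) .
      also have "\<dots> = last p" using ij(2) \<open>j = length p - 1\<close>
        by (metis last_conv_nth list.size(3) not_less0)
      finally show ?thesis .
    qed
    obtain q' where "walk A q' \<and> hd q' = hd q \<and> last q' = last q \<and> length q' \<le> length q \<and> distinct q'"
      using less.hyps[OF lq wq] by blast
    then show ?thesis using hq lastq lq by auto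
  qed
qed


lemma append_props:
  assumes "q1 \<noteq> []" "q2 \<noteq> []" "last q1 = hd q2"
  shows "hd (q1 @ tl q2) = hd q1" "last (q1 @ tl q2) = last q2"
    "length (q1 @ tl q2) - 1 = (length q1 - 1) + (length q2 - 1)"
proof -
  show "hd (q1 @ tl q2) = hd q1" using assms by simp
  show "last (q1 @ tl q2) = last q2"
  proof (cases "tl q2 = []")
    case True
    then have "q2 = [hd q2]" using assms(2) by (metis list.collapse)
    then show ?thesis using True assms by (metis append_Nil2 last_ConsL)
  next
    case False
    then show ?thesis by (simp add: last_tl)
  qed
  show "length (q1 @ tl q2) - 1 = (length q1 - 1) + (length q2 - 1)"
    using assms by (cases q1; cases q2) auto
qed

lemma walk_join:
  assumes "walk A q1" "walk A q2" "last q1 = hd q2"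
  shows "walk A (q1 @ tl q2) \<and> hd (q1 @ tl q2) = hd q1 \<and> last (q1 @ tl q2) = last q2 \<and>
    length (q1 @ tl q2) - 1 = (length q1 - 1) + (length q2 - 1)"
  using walk_append[OF assms] append_props[OF walk_nonempty[OF assms(1)] walk_nonempty[OF assms(2)] assms(3)]
  by blast

lemma walk_lift:
  assumes "walk E p"
    and edge: "\<And>u v. {u,v} \<in> E \<Longrightarrow> \<exists>q. walk H' q \<and> hd q = u \<and> last q = v \<and> length q - 1 \<le> k"
  shows "\<exists>q. walk H' q \<and> hd q = hd p \<and> last q = last p \<and> length q - 1 \<le> k * (length p - 1)"
  using assms(1)
proof (induction p rule: induct_list012)
  case 1 then show ?case by (simp add: walk_def)
next
  case (2 x) show ?case by (intro exI[of _ "[x]"]) simp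
next
  case (3 x y zs)
  have e: "{x, y} \<in> E" and w: "walk E (y # zs)" using "3.prems" by (simp_all add: walk_Cons2)
  obtain q' where q': "walk H' q'" "hd q' = y" "last q' = last (y # zs)"
    "length q' - 1 \<le> k * (length (y # zs) - 1)"
    using "3.IH"(2)[OF w] by (elim exE conjE) simp
  obtain q1 where q1: "walk H' q1" "hd q1 = x" "last q1 = y" "length q1 - 1 \<le> k"
    using edge[OF e] by (elim exE conjE) simp
  have j: "walk H' (q1 @ tl q') \<and> hd (q1 @ tl q') = hd q1 \<and> last (q1 @ tl q') = last q' \<and>
    length (q1 @ tl q') - 1 = (length q1 - 1) + (length q' - 1)"
    using walk_join[OF q1(1) q'(1)] q1(3) q'(2) by simp
  have "(length q1 - 1) + (length q' - 1) \<le> k + k * length zs" using q1(4) q'(4) by simp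
  also have "\<dots> = k * (length (x # y # zs) - 1)" by simp
  finally have "length (q1 @ tl q') - 1 \<le> k * (length (x # y # zs) - 1)" using j by simp
  moreover have "last (x # y # zs) = last (y # zs)" by simp
  ultimately show ?case using j q1(2) q'(3) by (intro exI[of _ "q1 @ tl q'"]) simp
qed


lemma spanner_from_edges:
  assumes "H' \<subseteq> E" "0 < k"
    and edge: "\<And>u v. {u,v} \<in> E \<Longrightarrow> \<exists>q. walk H' q \<and> hd q = u \<and> last q = v \<and> length q - 1 \<le> k"
  shows "is_spanner V E H' k"
  unfolding is_spanner_def
proof (intro conjI ballI)
  show "H' \<subseteq> E" by fact
  fix u v assume "u \<in> V" "v \<in> V"
  show "gdist H' u v \<le> enat k * gdist E u v"
  proof (cases "gdist E u v = \<infinity>")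
    case True
    then show ?thesis using assms(2) by (simp add: imult_infinity_right)
  next
    case False
    then obtain p where p: "walk E p" "hd p = u" "last p = v" "gdist E u v = enat (length p - 1)"
      using gdist_obtain_eq by metis
    have ex: "\<exists>q. walk H' q \<and> hd q = hd p \<and> last q = last p \<and> length q - 1 \<le> k * (length p - 1)"
      apply (rule walk_lift[OF p(1)])
      apply (erule edge)
      done
    obtain q where q: "walk H' q" "hd q = u" "last q = v" "length q - 1 \<le> k * (length p - 1)"
      using ex p(2,3) by (elim exE conjE) simp
    have "gdist H' u v \<le> enat (length q - 1)" using gdist_le_walk[OF q(1-3)] .
    also have "\<dots> \<le> enat (k * (length p - 1))" using q(4) by simp
    also have "\<dots> = enat k * gdist E u v" using p(4) by simp
    finally show ?thesis .
  qed
qed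


lemma mod_lt2:
  assumes "x < 2 * L"
  shows "x mod (L::nat) = (if x < L then x else x - L)"
proof (cases "x < L")
  case True then show ?thesis by simp
next
  case False
  then have "x mod L = (x - L) mod L" by (simp add: le_mod_geq)
  also have "\<dots> = x - L" using assms False by simp
  finally show ?thesis using False by simp
qed

definition pos :: "nat \<Rightarrow> nat \<Rightarrow> nat \<Rightarrow> nat" where
  "pos L j p = (p + L - Suc j) mod L"

definition ballset :: "nat \<Rightarrow> nat \<Rightarrow> nat \<Rightarrow> nat set" where
  "ballset L p \<rho> = (\<lambda>t. (p + L - Suc t) mod L) ` {..<\<rho>} \<union> (\<lambda>t. (p + t) mod L) ` {..<\<rho>}"

lemma card_ballset: "card (ballset L p \<rho>) \<le> 2 * \<rho>"
proof -
  have "card (ballset L p \<rho>) \<le> card ((\<lambda>t. (p + L - Suc t) mod L) ` {..<\<rho>}) + card ((\<lambda>t. (p + t) mod L) ` {..<\<rho>})"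
    unfolding ballset_def by (rule card_Un_le)
  also have "\<dots> \<le> \<rho> + \<rho>" by (intro add_mono) (metis card_image_le card_lessThan finite_lessThan)+
  finally show ?thesis by simp
qed

lemma finite_ballset: "finite (ballset L p \<rho>)"
  unfolding ballset_def by simp

lemma pos_lt: "0 < L \<Longrightarrow> pos L j p < L"
  unfolding pos_def by simp

lemma pos_eq:
  assumes "j < L" "p < L"
  shows "pos L j p = (if Suc j \<le> p then p - Suc j else p + L - Suc j)"
proof -
  have "p + L - Suc j < 2 * L" using assms by simp
  then show ?thesis unfolding pos_def using assms by (subst mod_lt2) auto
qed

lemma ball_low:
  assumes "j < L" "p < L" "pos L j p < \<rho>"
  shows "j \<in> ballset L p \<rho>"
proof -
  have "(p + L - Suc (pos L j p)) mod L = j"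
  proof (cases "Suc j \<le> p")
    case True
    then have "p + L - Suc (pos L j p) = L + j" using pos_eq[OF assms(1,2)] by simp
    then show ?thesis using assms by simp
  next
    case False
    then have "p + L - Suc (pos L j p) = j" using pos_eq[OF assms(1,2)] assms by simp
    then show ?thesis using assms by simp
  qed
  then show ?thesis unfolding ballset_def using assms(3)
    by (metis UnI1 image_eqI lessThan_iff)
qed

lemma ball_high:
  assumes "j < L" "p < L" "L - \<rho> \<le> pos L j p"
  shows "j \<in> ballset L p \<rho>"
proof -
  have pl: "pos L j p < L" using pos_lt assms by simp
  have "(p + (L - Suc (pos L j p))) mod L = j"
  proof (cases "Suc j \<le> p")
    case True
    then have "p + (L - Suc (pos L j p)) = L + j" using pos_eq[OF assms(1,2)] assms by simp
    then show ?thesis using assms by simp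
  next
    case False
    then have "p + (L - Suc (pos L j p)) = j" using pos_eq[OF assms(1,2)] assms by simp
    then show ?thesis using assms by simp
  qed
  moreover have "L - Suc (pos L j p) < \<rho>" using assms pl by simp
  ultimately show ?thesis unfolding ballset_def
    by (metis UnI2 image_eqI lessThan_iff)
qed

lemma ball_cover:
  assumes "j < L" "p < L" "q < L"
    and "L \<le> (if pos L j p \<le> pos L j q then pos L j q - pos L j p else pos L j p - pos L j q) + \<rho>p + \<rho>q"
  shows "j \<in> ballset L p \<rho>p \<union> ballset L q \<rho>q"
proof -
  have pp: "pos L j p < L" "pos L j q < L" using pos_lt assms by auto
  have "pos L j p < \<rho>p \<or> L - \<rho>p \<le> pos L j p \<or> pos L j q < \<rho>q \<or> L - \<rho>q \<le> pos L j q"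
    using assms(4) pp by (auto split: if_splits)
  then show ?thesis using ball_low ball_high assms by blast
qed

lemma sum_minus_le:
  fixes f :: "'b \<Rightarrow> nat"
  assumes "finite A" "x0 \<in> A" "c \<le> f x0"
  shows "(\<Sum>x\<in>A. f x - c) \<le> (\<Sum>x\<in>A. f x) - c"
proof -
  have "(\<Sum>x\<in>A. f x - c) = (f x0 - c) + (\<Sum>x\<in>A - {x0}. f x - c)"
    using assms by (simp add: sum.remove)
  also have "\<dots> \<le> (f x0 - c) + (\<Sum>x\<in>A - {x0}. f x)"
    by (intro add_left_mono sum_mono) simp
  also have "\<dots> = (\<Sum>x\<in>A. f x) - c"
    using assms by (simp add: sum.remove)
  finally show ?thesis .
qed

lemma radii:
  fixes \<kappa> :: "nat \<Rightarrow> nat"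
  assumes "0 < L"
  shows "\<exists>r. (\<forall>p<L. \<forall>q<L. p \<noteq> q \<longrightarrow> \<kappa> p + \<kappa> q \<le> r p + r q + s) \<and>
             (\<Sum>x<L. r x) \<le> (\<Sum>x<L. \<kappa> x) - s"
proof -
  obtain x1 where x1: "x1 < L" "\<forall>y<L. \<kappa> y \<le> \<kappa> x1"
  proof -
    have "finite (\<kappa> ` {..<L})" "\<kappa> ` {..<L} \<noteq> {}" using assms by auto
    then have "Max (\<kappa> ` {..<L}) \<in> \<kappa> ` {..<L}" by (rule Max_in)
    then obtain x1 where "x1 < L" "\<kappa> x1 = Max (\<kappa> ` {..<L})" by auto
    moreover have "\<forall>y<L. \<kappa> y \<le> Max (\<kappa> ` {..<L})" by simp
    ultimately show ?thesis using that by metis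
  qed
  define K where "K = \<kappa> x1"
  define r where "r y = (if y = x1 then K - s else \<kappa> y - (s - K))" for y
  have pair: "\<forall>p<L. \<forall>q<L. p \<noteq> q \<longrightarrow> \<kappa> p + \<kappa> q \<le> r p + r q + s"
  proof (intro allI impI)
    fix p q assume "p < L" "q < L" "p \<noteq> q"
    then have "\<kappa> p \<le> K" "\<kappa> q \<le> K" using x1 unfolding K_def by auto
    then show "\<kappa> p + \<kappa> q \<le> r p + r q + s"
      unfolding r_def using \<open>p \<noteq> q\<close> K_def by auto
  qed
  have Ldec: "{..<L} = insert x1 ({..<L} - {x1})" using x1 by auto
  have sk: "(\<Sum>x<L. \<kappa> x) = K + (\<Sum>x\<in>{..<L} - {x1}. \<kappa> x)"
    using x1 unfolding K_def by (simp add: sum.remove)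
  have sr: "(\<Sum>x<L. r x) = r x1 + (\<Sum>x\<in>{..<L} - {x1}. r x)"
    using x1 by (simp add: sum.remove)
  have sr2: "(\<Sum>x\<in>{..<L} - {x1}. r x) = (\<Sum>x\<in>{..<L} - {x1}. \<kappa> x - (s - K))"
    unfolding r_def by (intro sum.cong) auto
  have "(\<Sum>x<L. r x) \<le> (\<Sum>x<L. \<kappa> x) - s"
  proof (cases "s \<le> K")
    case True
    then have "(\<Sum>x\<in>{..<L} - {x1}. r x) = (\<Sum>x\<in>{..<L} - {x1}. \<kappa> x)" using sr2 by simp
    then show ?thesis using sr sk True unfolding r_def by simp
  next
    case False
    show ?thesis
    proof (cases "\<exists>x0\<in>{..<L} - {x1}. s - K \<le> \<kappa> x0")
      case True
      then obtain x0 where "x0 \<in> {..<L} - {x1}" "s - K \<le> \<kappa> x0" by blast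
      then have "(\<Sum>x\<in>{..<L} - {x1}. \<kappa> x - (s - K)) \<le> (\<Sum>x\<in>{..<L} - {x1}. \<kappa> x) - (s - K)"
        by (intro sum_minus_le) auto
      then show ?thesis using sr sr2 sk False unfolding r_def by simp
    next
      case nx: False
      have "\<forall>x\<in>{..<L} - {x1}. \<kappa> x - (s - K) = 0"
      proof
        fix x assume "x \<in> {..<L} - {x1}"
        then have "\<not> s - K \<le> \<kappa> x" using nx by blast
        then show "\<kappa> x - (s - K) = 0" by simp
      qed
      then have "(\<Sum>x\<in>{..<L} - {x1}. \<kappa> x - (s - K)) = 0" by (rule sum.neutral)
      then show ?thesis using sr sr2 False unfolding r_def by simp
    qed
  qed
  then show ?thesis using pair by blast
qed


lemma graph_edge:
  assumes "graph V E" "{x, y} \<in> E"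
  shows "x \<in> V \<and> y \<in> V \<and> x \<noteq> y"
proof -
  obtain a b where ab: "{x, y} = {a, b}" "a \<noteq> b" "a \<in> V" "b \<in> V"
    using assms unfolding graph_def by blast
  then have "x \<in> V" "y \<in> V" by (auto simp: doubleton_eq_iff)
  moreover have "x \<noteq> y" using ab by (auto simp: doubleton_eq_iff)
  ultimately show ?thesis by blast
qed

locale core =
  fixes V :: "'a set" and E H :: "'a set set" and C :: "'a list"
  assumes graphVE: "graph V E" and HE: "H \<subseteq> E" and cyc: "is_cycle V H C"
begin

abbreviation "L \<equiv> length C"

definition S where "S = V - set C"

definition wk where
  "wk w i t \<longleftrightarrow> (\<exists>p. walk H p \<and> hd p = w \<and> last p = C ! i \<and> length p = Suc t)"

definition conn where "conn w \<longleftrightarrow> (\<exists>i t. i < L \<and> wk w i t)"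

definition alpha where "alpha w = (LEAST t. \<exists>i<L. wk w i t)"

definition root where "root w = (LEAST i. i < L \<and> wk w i (alpha w))"

definition kappa where "kappa x = card {w \<in> S. conn w \<and> root w = x}"

lemma L3: "3 \<le> L" using cyc unfolding is_cycle_def by simp

lemma distC: "distinct C" using cyc unfolding is_cycle_def by simp

lemma CV: "set C \<subseteq> V" using cyc unfolding is_cycle_def by simp

lemma finV: "finite V" using graphVE unfolding graph_def by simp

lemma finS: "finite S" unfolding S_def using finV by simp

lemma cyc_edge: "i < L \<Longrightarrow> {C ! i, C ! ((i + 1) mod L)} \<in> H"
  using cyc unfolding is_cycle_def by simp

lemma H_edge: "{x, y} \<in> H \<Longrightarrow> x \<in> V \<and> y \<in> V \<and> x \<noteq> y"
  using graph_edge[OF graphVE] HE by blast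

lemma walk_vertex_V:
  assumes "walk H p" "2 \<le> length p" "t < length p"
  shows "p ! t \<in> V"
proof (cases "Suc t < length p")
  case True
  then have "{p ! t, p ! Suc t} \<in> H" using assms unfolding walk_def by blast
  then show ?thesis using H_edge by blast
next
  case False
  then have "t = Suc (t - 1)" "Suc (t - 1) < length p" using assms by auto
  then have "{p ! (t - 1), p ! Suc (t - 1)} \<in> H" using assms unfolding walk_def by blast
  then show ?thesis using H_edge \<open>t = Suc (t - 1)\<close> by metis
qed

lemma wk_C: "i < L \<Longrightarrow> wk (C ! i) i 0"
  unfolding wk_def by (intro exI[of _ "[C ! i]"]) simp

lemma wk_cons:
  assumes "{w, w'} \<in> H" "wk w' i t"
  shows "wk w i (Suc t)"
proof -
  obtain p where p: "walk H p" "hd p = w'" "last p = C ! i" "length p = Suc t"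
    using assms(2) unfolding wk_def by (elim exE conjE) simp
  have "p \<noteq> []" using p by auto
  then have "p = w' # tl p" using p(2) by (metis list.collapse)
  then have "walk H (w # p)" using p(1) assms(1) walk_Cons2 by metis
  moreover have "last (w # p) = C ! i" using p \<open>p \<noteq> []\<close> by simp
  ultimately show ?thesis unfolding wk_def using p by (intro exI[of _ "w # p"]) simp
qed

lemma alpha_props:
  assumes "conn w"
  shows "\<exists>i<L. wk w i (alpha w)" "\<And>i t. i < L \<Longrightarrow> wk w i t \<Longrightarrow> alpha w \<le> t"
proof -
  have ex: "\<exists>t. \<exists>i<L. wk w i t" using assms unfolding conn_def by blast
  show "\<exists>i<L. wk w i (alpha w)" unfolding alpha_def by (rule LeastI_ex[OF ex])
  show "\<And>i t. i < L \<Longrightarrow> wk w i t \<Longrightarrow> alpha w \<le> t" unfolding alpha_def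
    by (auto intro: Least_le)
qed

lemma root_props:
  assumes "conn w"
  shows "root w < L" "wk w (root w) (alpha w)" "\<And>i. i < L \<Longrightarrow> wk w i (alpha w) \<Longrightarrow> root w \<le> i"
proof -
  have ex: "\<exists>i. i < L \<and> wk w i (alpha w)" using alpha_props(1)[OF assms] by blast
  have "root w < L \<and> wk w (root w) (alpha w)" unfolding root_def by (rule LeastI_ex[OF ex])
  then show "root w < L" "wk w (root w) (alpha w)" by auto
  show "\<And>i. i < L \<Longrightarrow> wk w i (alpha w) \<Longrightarrow> root w \<le> i" unfolding root_def
    by (auto intro: Least_le)
qed

lemma alpha_C:
  assumes "w \<in> set C"
  shows "conn w" "alpha w = 0"
proof -
  obtain i where i: "i < L" "w = C ! i" using assms by (metis in_set_conv_nth)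
  show "conn w" unfolding conn_def using wk_C i by blast
  then show "alpha w = 0" using alpha_props(2)[OF _ i(1)] wk_C i by fastforce
qed

lemma leg:
  assumes "conn w"
  shows "\<exists>p. walk H p \<and> hd p = w \<and> last p = C ! root w \<and> length p = Suc (alpha w) \<and>
    (\<forall>t<alpha w. p ! t \<notin> set C)"
proof -
  obtain p where p: "walk H p" "hd p = w" "last p = C ! root w" "length p = Suc (alpha w)"
    using root_props(2)[OF assms] unfolding wk_def by (elim exE conjE) simp
  have "\<forall>t<alpha w. p ! t \<notin> set C"
  proof (intro allI impI)
    fix t assume t: "t < alpha w"
    show "p ! t \<notin> set C"
    proof
      assume "p ! t \<in> set C"
      then obtain i where i: "i < L" "p ! t = C ! i" by (metis in_set_conv_nth)
      have "walk H (take (Suc t) p)" using walk_take p(1) by blast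
      moreover have "hd (take (Suc t) p) = w" using p(2) p(4) by (cases p) auto
      moreover have "last (take (Suc t) p) = C ! i" using i t p(4)
        by (simp add: take_Suc_conv_app_nth)
      moreover have "length (take (Suc t) p) = Suc t" using t p(4) by simp
      ultimately have "wk w i t" unfolding wk_def by (intro exI[of _ "take (Suc t) p"]) simp
      then have "alpha w \<le> t" using alpha_props(2)[OF assms i(1)] by blast
      then show False using t by simp
    qed
  qed
  then show ?thesis using p by (intro exI[of _ p]) simp
qed

lemma step:
  assumes "conn w" "alpha w = Suc t"
  shows "\<exists>w'. conn w' \<and> alpha w' = t \<and> root w' = root w \<and> w' \<in> V"
proof -
  obtain p where p: "walk H p" "hd p = w" "last p = C ! root w" "length p = Suc (alpha w)"
    using leg[OF assms(1)] by (elim exE conjE) simp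
  define w' where "w' = p ! 1"
  have p01: "{p ! 0, p ! Suc 0} \<in> H" using p assms(2) unfolding walk_def by simp
  have hp: "p ! 0 = w" using p by (cases p) auto
  have e: "{w, w'} \<in> H" using p01 hp unfolding w'_def by simp
  have w'V: "w' \<in> V" using H_edge e by blast
  have d: "walk H (drop 1 p)" using walk_drop[OF p(1), of 1] p(4) assms(2) by simp
  have "hd (drop 1 p) = w'" unfolding w'_def using p(4) assms(2) by (simp add: hd_drop_conv_nth)
  moreover have "last (drop 1 p) = C ! root w" using p(3,4) assms(2) by simp
  moreover have "length (drop 1 p) = Suc t" using p(4) assms(2) by simp
  ultimately have wk1: "wk w' (root w) t" unfolding wk_def using d by (intro exI[of _ "drop 1 p"]) simp
  have rl: "root w < L" using root_props(1)[OF assms(1)] .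
  have cw': "conn w'" unfolding conn_def using wk1 rl by blast
  have a1: "alpha w' \<le> t" using alpha_props(2)[OF cw' rl wk1] .
  obtain i where i: "i < L" "wk w' i (alpha w')" using alpha_props(1)[OF cw'] by blast
  have "wk w i (Suc (alpha w'))" using wk_cons[OF e i(2)] .
  then have "alpha w \<le> Suc (alpha w')" using alpha_props(2)[OF assms(1) i(1)] by blast
  then have aw': "alpha w' = t" using a1 assms(2) by simp
  have r1: "root w' \<le> root w" using root_props(3)[OF cw' rl] wk1 aw' by simp
  have "wk w (root w') (Suc t)" using wk_cons[OF e] root_props(2)[OF cw'] aw' by simp
  then have r2: "root w \<le> root w'" using root_props(3)[OF assms(1) root_props(1)[OF cw']] assms(2) by simp
  show ?thesis using cw' aw' r1 r2 w'V by (intro exI[of _ w']) simp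
qed

lemma down:
  assumes "conn w" "w \<in> V" "m \<le> alpha w"
  shows "\<exists>w'. conn w' \<and> alpha w' = alpha w - m \<and> root w' = root w \<and> w' \<in> V"
  using assms(3)
proof (induction m)
  case 0 then show ?case using assms by (intro exI[of _ w]) simp
next
  case (Suc m)
  then obtain w1 where w1: "conn w1" "alpha w1 = alpha w - m" "root w1 = root w" "w1 \<in> V"
    by (metis Suc_leD)
  have "alpha w1 = Suc (alpha w - Suc m)" using w1(2) Suc.prems by simp
  then obtain w2 where "conn w2" "alpha w2 = alpha w - Suc m" "root w2 = root w1" "w2 \<in> V"
    using step[OF w1(1) \<open>alpha w1 = Suc (alpha w - Suc m)\<close>] by (elim exE conjE) simp
  then show ?case using w1(3) by (intro exI[of _ w2]) simp
qed

lemma alpha_le_kappa: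
  assumes "conn w" "w \<in> V"
  shows "alpha w \<le> kappa (root w)"
proof -
  let ?A = "{w' \<in> S. conn w' \<and> root w' = root w}"
  have "{1..alpha w} \<subseteq> alpha ` ?A"
  proof
    fix t assume t: "t \<in> {1..alpha w}"
    have "alpha w - t \<le> alpha w" by simp
    then obtain w' where w': "conn w'" "alpha w' = alpha w - (alpha w - t)" "root w' = root w" "w' \<in> V"
      using down[OF assms \<open>alpha w - t \<le> alpha w\<close>] by (elim exE conjE) simp
    have at: "alpha w' = t" using w'(2) t by simp
    then have "w' \<notin> set C" using alpha_C(2) t by fastforce
    then have "w' \<in> ?A" using w' unfolding S_def by simp
    then show "t \<in> alpha ` ?A" using at by force
  qed
  have finA: "finite ?A" using finS by simp
  have "alpha w = card {1..alpha w}" by simp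
  also have "\<dots> \<le> card (alpha ` ?A)" using \<open>{1..alpha w} \<subseteq> alpha ` ?A\<close> finA by (intro card_mono) auto
  also have "\<dots> \<le> card ?A" using finA by (rule card_image_le)
  finally show ?thesis unfolding kappa_def .
qed

lemma sum_kappa: "(\<Sum>x<L. kappa x) \<le> card S"
proof -
  let ?A = "\<lambda>x. {w \<in> S. conn w \<and> root w = x}"
  have "card (\<Union>x\<in>{..<L}. ?A x) = (\<Sum>x<L. card (?A x))"
    using finS by (intro card_UN_disjoint) auto
  moreover have "card (\<Union>x\<in>{..<L}. ?A x) \<le> card S" using finS by (intro card_mono) auto
  ultimately show ?thesis unfolding kappa_def by simp
qed

end


context core
begin

lemma cyc_edge_inj:
  assumes "i < L" "j < L" "{C ! i, C ! ((i + 1) mod L)} = {C ! j, C ! ((j + 1) mod L)}"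
  shows "i = j"
proof -
  have L0: "0 < L" using L3 by linarith
  have m1: "(i + 1) mod L < L" "(j + 1) mod L < L" using L0 by auto
  have inj: "\<And>a b. a < L \<Longrightarrow> b < L \<Longrightarrow> C ! a = C ! b \<Longrightarrow> a = b"
    using distC nth_eq_iff_index_eq by blast
  have mi: "(i + 1) mod L = (if i + 1 < L then i + 1 else i + 1 - L)"
    using assms(1) by (intro mod_lt2) simp
  have mj: "(j + 1) mod L = (if j + 1 < L then j + 1 else j + 1 - L)"
    using assms(2) by (intro mod_lt2) simp
  from assms(3) have "(C ! i = C ! j \<and> C ! ((i + 1) mod L) = C ! ((j + 1) mod L)) \<or>
      (C ! i = C ! ((j + 1) mod L) \<and> C ! ((i + 1) mod L) = C ! j)"
    by (auto simp: doubleton_eq_iff)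
  then show ?thesis
  proof
    assume "C ! i = C ! j \<and> C ! ((i + 1) mod L) = C ! ((j + 1) mod L)"
    then show ?thesis using inj assms by blast
  next
    assume h: "C ! i = C ! ((j + 1) mod L) \<and> C ! ((i + 1) mod L) = C ! j"
    then have a: "i = (j + 1) mod L" "(i + 1) mod L = j" using inj assms m1 by blast+
    have i_eq: "i = (if j + 1 < L then j + 1 else j + 1 - L)" using a(1) mj by simp
    have j_eq: "j = (if i + 1 < L then i + 1 else i + 1 - L)" using a(2) mi by simp
    have l3: "3 \<le> L" by (rule L3)
    show ?thesis
    proof (cases "j + 1 < L")
      case True
      then have "i = j + 1" using i_eq by simp
      then show ?thesis using j_eq l3 by (cases "i + 1 < L") simp_all
    next
      case False
      then have "i = j + 1 - L" using i_eq by simp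
      then show ?thesis using j_eq l3 False assms(2) by (cases "i + 1 < L") simp_all
    qed
  qed
qed

lemma walk_avoid:
  assumes "walk H p" "\<forall>t. Suc t < length p \<longrightarrow> p ! t \<notin> set C" "e \<subseteq> set C"
  shows "walk (H - {e}) p"
  unfolding walk_def
proof (intro conjI allI impI)
  show "p \<noteq> []" using assms(1) walk_nonempty by blast
  fix t assume t: "Suc t < length p"
  have "{p ! t, p ! Suc t} \<in> H" using assms(1) t unfolding walk_def by blast
  moreover have "{p ! t, p ! Suc t} \<noteq> e" using assms(2,3) t by blast
  ultimately show "{p ! t, p ! Suc t} \<in> H - {e}" by blast
qed

end

locale core_j = core +
  fixes j0 :: nat
  assumes j0L: "j0 < L"
begin

definition qv where "qv t = C ! ((Suc j0 + t) mod L)"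
definition e0 where "e0 = {C ! j0, C ! ((j0 + 1) mod L)}"

lemma L0: "0 < L" using L3 by linarith

lemma e0C: "e0 \<subseteq> set C"
  unfolding e0_def using j0L L0 by auto

lemma e0_cyc: "e0 \<in> cycle_edges C"
  unfolding e0_def cycle_edges_def using j0L by blast

lemma qv_edge:
  assumes "Suc t < L"
  shows "{qv t, qv (Suc t)} \<in> H - {e0}"
proof -
  define m where "m = (Suc j0 + t) mod L"
  have mL: "m < L" unfolding m_def using L0 by simp
  have "(Suc j0 + Suc t) mod L = (m + 1) mod L" unfolding m_def by (simp add: mod_Suc_eq)
  then have q: "{qv t, qv (Suc t)} = {C ! m, C ! ((m + 1) mod L)}" unfolding qv_def m_def by simp
  have "m = (if Suc j0 + t < L then Suc j0 + t else Suc j0 + t - L)"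
    unfolding m_def using assms j0L by (intro mod_lt2) simp
  then have "m \<noteq> j0" using assms by (auto split: if_splits)
  then have "{C ! m, C ! ((m + 1) mod L)} \<noteq> e0" unfolding e0_def using cyc_edge_inj mL j0L by blast
  then show ?thesis using q cyc_edge[OF mL] by simp
qed

lemma qwalk:
  assumes "a \<le> b" "b < L"
  shows "walk (H - {e0}) (map qv [a..<Suc b])"
  unfolding walk_def
proof (intro conjI allI impI)
  show "map qv [a..<Suc b] \<noteq> []" using assms by simp
  fix i assume i: "Suc i < length (map qv [a..<Suc b])"
  then have "Suc (a + i) < L" "Suc i < Suc b - a" using assms by auto
  then have "{qv (a + i), qv (Suc (a + i))} \<in> H - {e0}" using qv_edge by blast
  moreover have "map qv [a..<Suc b] ! i = qv (a + i)" using i by (simp del: upt_Suc)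
  moreover have "map qv [a..<Suc b] ! Suc i = qv (Suc (a + i))" using i by (simp del: upt_Suc)
  ultimately show "{map qv [a..<Suc b] ! i, map qv [a..<Suc b] ! Suc i} \<in> H - {e0}"
    by simp
qed

lemma qv_pos: "p < L \<Longrightarrow> qv (pos L j0 p) = C ! p"
proof -
  assume p: "p < L"
  have "(Suc j0 + pos L j0 p) mod L = p"
  proof (cases "Suc j0 \<le> p")
    case True then show ?thesis using pos_eq[OF j0L p] p by simp
  next
    case False
    then have "Suc j0 + pos L j0 p = p + L" using pos_eq[OF j0L p] p j0L by simp
    then show ?thesis using p by simp
  qed
  then show ?thesis unfolding qv_def by simp
qed

lemma cyc_walk:
  assumes "p < L" "q < L"
  shows "\<exists>w. walk (H - {e0}) w \<and> hd w = C ! p \<and> last w = C ! q \<and>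
    length w - 1 = (if pos L j0 p \<le> pos L j0 q then pos L j0 q - pos L j0 p else pos L j0 p - pos L j0 q)"
proof -
  have pl: "pos L j0 p < L" "pos L j0 q < L" using pos_lt L0 by auto
  show ?thesis
  proof (cases "pos L j0 p \<le> pos L j0 q")
    case True
    let ?w = "map qv [pos L j0 p..<Suc (pos L j0 q)]"
    have "walk (H - {e0}) ?w" using qwalk True pl by blast
    moreover have "hd ?w = C ! p" using True qv_pos assms by (simp del: upt_Suc add: upt_conv_Cons)
    moreover have "last ?w = C ! q" using True qv_pos assms by (simp add: last_map)
    moreover have "length ?w - 1 = pos L j0 q - pos L j0 p" using True by simp
    ultimately show ?thesis using True by (intro exI[of _ ?w]) simp
  next
    case False
    let ?w = "rev (map qv [pos L j0 q..<Suc (pos L j0 p)])"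
    have "walk (H - {e0}) (map qv [pos L j0 q..<Suc (pos L j0 p)])"
      by (rule qwalk) (use False pl in auto)
    then have "walk (H - {e0}) ?w" by (rule walk_rev)
    moreover have "hd ?w = C ! p" using False qv_pos assms by (simp add: hd_rev last_map)
    moreover have "last ?w = C ! q" using False qv_pos assms by (simp del: upt_Suc add: last_rev upt_conv_Cons)
    moreover have "length ?w - 1 = pos L j0 p - pos L j0 q" using False by simp
    ultimately show ?thesis using False by (intro exI[of _ ?w]) simp
  qed
qed

end


context core_j
begin

lemma main_edge:
  fixes r :: "nat \<Rightarrow> nat" and s k :: nat
  assumes notin: "j0 \<notin> (\<Union>x<L. ballset L x (r x))"
    and pair: "\<forall>p<L. \<forall>q<L. p \<noteq> q \<longrightarrow> kappa p + kappa q \<le> r p + r q + s"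
    and ks: "k + 1 = s + L" and Sk: "card S \<le> k"
    and uv: "{u, v} \<in> E"
    and Pex: "walk H P0" "hd P0 = u" "last P0 = v" "length P0 - 1 \<le> k"
  shows "\<exists>q. walk (H - {e0}) q \<and> hd q = u \<and> last q = v \<and> length q - 1 \<le> k"
proof -
  obtain P where P: "walk H P" "hd P = u" "last P = v" "length P \<le> length P0" "distinct P"
    using walk_distinct[OF Pex(1)] Pex(2,3) by (elim exE conjE) simp
  have uvV: "u \<in> V" "v \<in> V" "u \<noteq> v" using graph_edge[OF graphVE uv] by auto
  have Pne: "P \<noteq> []" using P(1) walk_nonempty by blast
  have lenP: "2 \<le> length P"
  proof (rule ccontr)
    assume "\<not> 2 \<le> length P"
    then have "length P - 1 = 0" by simp
    then have "last P = P ! 0" using Pne by (simp add: last_conv_nth)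
    also have "\<dots> = hd P" using Pne by (simp add: hd_conv_nth)
    finally show False using P(2,3) uvV(3) by simp
  qed
  have lenk: "length P - 1 \<le> k" using P(4) Pex(4) by simp
  show ?thesis
  proof (cases "\<exists>t<length P. P ! t \<in> set C")
    case False
    then have "\<forall>t. Suc t < length P \<longrightarrow> P ! t \<notin> set C" by auto
    then have "walk (H - {e0}) P" using walk_avoid[OF P(1) _ e0C] by blast
    then show ?thesis using P(2,3) lenk by (intro exI[of _ P]) simp
  next
    case True
    define T where "T = {t. t < length P \<and> P ! t \<in> set C}"
    have finT: "finite T" unfolding T_def by simp
    have neT: "T \<noteq> {}" unfolding T_def using True by blast
    define i1 where "i1 = Min T"
    define i2 where "i2 = Max T"
    have i1T: "i1 \<in> T" unfolding i1_def using finT neT by (rule Min_in)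
    have i2T: "i2 \<in> T" unfolding i2_def using finT neT by (rule Max_in)
    have i12: "i1 \<le> i2" unfolding i1_def i2_def using finT neT by (simp add: Min_le_iff)
    have before: "\<forall>t<i1. P ! t \<notin> set C"
    proof (intro allI impI)
      fix t assume t: "t < i1"
      have "t < length P" using t i1T unfolding T_def by simp
      show "P ! t \<notin> set C"
      proof
        assume "P ! t \<in> set C"
        then have "t \<in> T" unfolding T_def using \<open>t < length P\<close> by simp
        then have "i1 \<le> t" unfolding i1_def using finT by simp
        then show False using t by simp
      qed
    qed
    have after: "\<forall>t. i2 < t \<longrightarrow> t < length P \<longrightarrow> P ! t \<notin> set C"
    proof (intro allI impI)
      fix t assume t: "i2 < t" "t < length P"
      show "P ! t \<notin> set C"
      proof
        assume "P ! t \<in> set C"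
        then have "t \<in> T" unfolding T_def using t by simp
        then have "t \<le> i2" unfolding i2_def using finT by simp
        then show False using t by simp
      qed
    qed
    have i2P: "i2 < length P" using i2T unfolding T_def by simp
    have i1P: "i1 < length P" using i1T unfolding T_def by simp
    obtain c1 where c1: "c1 < L" "P ! i1 = C ! c1"
      using i1T unfolding T_def by (metis (mono_tags, lifting) in_set_conv_nth mem_Collect_eq)
    obtain c2 where c2: "c2 < L" "P ! i2 = C ! c2"
      using i2T unfolding T_def by (metis (mono_tags, lifting) in_set_conv_nth mem_Collect_eq)
    have wk1: "wk u c1 i1"
    proof -
      have "walk H (take (Suc i1) P)" using walk_take P(1) by blast
      moreover have "hd (take (Suc i1) P) = u" using P(2) Pne by (cases P) auto
      moreover have "last (take (Suc i1) P) = C ! c1" using i1P c1(2)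
        by (simp add: take_Suc_conv_app_nth)
      moreover have "length (take (Suc i1) P) = Suc i1" using i1P by simp
      ultimately show ?thesis unfolding wk_def by (intro exI[of _ "take (Suc i1) P"]) simp
    qed
    have wk2: "wk v c2 (length P - 1 - i2)"
    proof -
      have "walk H (drop i2 P)" using walk_drop P(1) i2P by blast
      then have "walk H (rev (drop i2 P))" by (rule walk_rev)
      moreover have "hd (rev (drop i2 P)) = v" using P(3) i2P by (simp add: hd_rev last_drop)
      moreover have "last (rev (drop i2 P)) = C ! c2" using i2P c2(2)
        by (simp add: last_rev hd_drop_conv_nth)
      moreover have "length (rev (drop i2 P)) = Suc (length P - 1 - i2)" using i2P by simp
      ultimately show ?thesis unfolding wk_def by (intro exI[of _ "rev (drop i2 P)"]) simp
    qed
    have cu: "conn u" unfolding conn_def using wk1 c1(1) by blast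
    have cv: "conn v" unfolding conn_def using wk2 c2(1) by blast
    have au: "alpha u \<le> i1" using alpha_props(2)[OF cu c1(1) wk1] .
    have av: "alpha v \<le> length P - 1 - i2" using alpha_props(2)[OF cv c2(1) wk2] .
    define I where "I = {..<i1} \<union> {i2<..<length P}"
    have cardI: "card I = i1 + (length P - 1 - i2)"
    proof -
      have "{..<i1} \<inter> {i2<..<length P} = {}" using i12 by auto
      then have "card I = card {..<i1} + card {i2<..<length P}" unfolding I_def
        by (intro card_Un_disjoint) auto
      then show ?thesis by simp
    qed
    have injI: "inj_on (nth P) I" using P(5) unfolding I_def using i1P by (intro inj_on_nth) auto
    have imgS: "nth P ` I \<subseteq> S"
    proof
      fix x assume "x \<in> nth P ` I"
      then obtain t where t: "t \<in> I" "x = P ! t" by blast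
      have tl: "t < length P" using t(1) i1P unfolding I_def by auto
      have "P ! t \<in> V" using walk_vertex_V[OF P(1) lenP tl] .
      moreover have "P ! t \<notin> set C" using t(1) before after tl unfolding I_def by auto
      ultimately show "x \<in> S" unfolding S_def using t(2) by simp
    qed
    have "card I \<le> card S"
    proof -
      have "card I = card (nth P ` I)" using injI by (simp add: card_image)
      also have "\<dots> \<le> card S" using imgS finS by (intro card_mono)
      finally show ?thesis .
    qed
    then have auv: "alpha u + alpha v \<le> card S" using cardI au av by simp
    obtain Wu where Wu: "walk H Wu" "hd Wu = u" "last Wu = C ! root u" "length Wu = Suc (alpha u)"
      "\<forall>t<alpha u. Wu ! t \<notin> set C"
      using leg[OF cu] by (elim exE conjE) simp
    obtain Wv where Wv: "walk H Wv" "hd Wv = v" "last Wv = C ! root v" "length Wv = Suc (alpha v)"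
      "\<forall>t<alpha v. Wv ! t \<notin> set C"
      using leg[OF cv] by (elim exE conjE) simp
    have WuA: "walk (H - {e0}) Wu" using Wu(4,5) by (intro walk_avoid[OF Wu(1) _ e0C]) auto
    have WvA: "walk (H - {e0}) Wv" using Wv(4,5) by (intro walk_avoid[OF Wv(1) _ e0C]) auto
    have WvR: "walk (H - {e0}) (rev Wv)" using WvA by (rule walk_rev)
    have Wvne: "Wv \<noteq> []" using Wv(4) by auto
    have hWvR: "hd (rev Wv) = C ! root v" using Wv(3) Wvne by (simp add: hd_rev)
    have lWvR: "last (rev Wv) = v" using Wv(2) Wvne by (simp add: last_rev)
    have ru: "root u < L" using root_props(1)[OF cu] .
    have rv: "root v < L" using root_props(1)[OF cv] .
    define D where "D = (if pos L j0 (root u) \<le> pos L j0 (root v) then pos L j0 (root v) - pos L j0 (root u)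
      else pos L j0 (root u) - pos L j0 (root v))"
    obtain Q where Q: "walk (H - {e0}) Q" "hd Q = C ! root u" "last Q = C ! root v" "length Q - 1 = D"
      using cyc_walk[OF ru rv] unfolding D_def by (elim exE conjE) simp
    have J1: "walk (H - {e0}) (Wu @ tl Q) \<and> hd (Wu @ tl Q) = hd Wu \<and> last (Wu @ tl Q) = last Q \<and>
      length (Wu @ tl Q) - 1 = (length Wu - 1) + (length Q - 1)"
      using walk_join[OF WuA Q(1)] Wu(3) Q(2) by simp
    have J2: "walk (H - {e0}) ((Wu @ tl Q) @ tl (rev Wv)) \<and> hd ((Wu @ tl Q) @ tl (rev Wv)) = hd (Wu @ tl Q) \<and>
      last ((Wu @ tl Q) @ tl (rev Wv)) = last (rev Wv) \<and>
      length ((Wu @ tl Q) @ tl (rev Wv)) - 1 = (length (Wu @ tl Q) - 1) + (length (rev Wv) - 1)"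
      using walk_join[of "H - {e0}" "Wu @ tl Q" "rev Wv"] J1 WvR Q(3) hWvR by simp
    let ?W = "(Wu @ tl Q) @ tl (rev Wv)"
    have lenW: "length ?W - 1 = alpha u + D + alpha v" using J1 J2 Wu(4) Wv(4) Q(4) by simp
    have hW: "hd ?W = u" using J1 J2 Wu(2) by simp
    have lW: "last ?W = v" using J2 lWvR by simp
    have wW: "walk (H - {e0}) ?W" using J2 by simp
    show ?thesis
    proof (cases "alpha u + D + alpha v \<le> k")
      case True
      then show ?thesis using hW lW wW lenW by (intro exI[of _ ?W]) simp
    next
      case False
      show ?thesis
      proof (cases "root u = root v")
        case True
        then have "D = 0" unfolding D_def by simp
        then show ?thesis using False auv Sk by simp
      next
        case ne: False
        have "alpha u \<le> kappa (root u)" using alpha_le_kappa[OF cu uvV(1)] .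
        moreover have "alpha v \<le> kappa (root v)" using alpha_le_kappa[OF cv uvV(2)] .
        moreover have "kappa (root u) + kappa (root v) \<le> r (root u) + r (root v) + s"
          using pair ru rv ne by blast
        ultimately have "L \<le> D + r (root u) + r (root v)" using False ks by simp
        then have "j0 \<in> ballset L (root u) (r (root u)) \<union> ballset L (root v) (r (root v))"
          using ball_cover[OF j0L ru rv] unfolding D_def by blast
        then have "j0 \<in> (\<Union>x<L. ballset L x (r x))" using ru rv by blast
        then show ?thesis using notin by blast
      qed
    qed
  qed
qed

end


theorem lemma3p1:
  fixes V :: "'a set" and E H :: "'a set set" and n k :: nat and C :: "'a list"
  assumes "graph V E"
    and "card V = n"
    and "is_spanner V E H k"
    and "is_cycle V H C"
    and "\<forall>C'. is_cycle V H C' \<longrightarrow> length C \<le> length C'"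
    and "2 * (int n - int k) \<le> int (length C)"
    and "length C \<le> k + 1"
  shows "\<exists>e \<in> cycle_edges C. is_spanner V E (H - {e}) k"
proof -
  have HE: "H \<subseteq> E" using assms(3) unfolding is_spanner_def by simp
  interpret core V E H C using assms(1) HE assms(4) by unfold_locales
  define s where "s = k + 1 - L"
  have ks: "k + 1 = s + L" unfolding s_def using assms(7) by simp
  have cardC: "card (set C) = L" using distC by (simp add: distinct_card)
  have cardS: "card S = n - L" unfolding S_def using CV finV assms(2) cardC
    by (simp add: card_Diff_subset)
  have LV: "L \<le> n" using card_mono[OF finV CV] cardC assms(2) by simp
  have twoN: "2 * card S + L \<le> 2 * k" using assms(6) cardS LV by simp
  have Sk: "card S \<le> k" using twoN L3 by simp
  have L0: "0 < L" using L3 by linarith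
  obtain r where r: "\<forall>p<L. \<forall>q<L. p \<noteq> q \<longrightarrow> kappa p + kappa q \<le> r p + r q + s"
    "(\<Sum>x<L. r x) \<le> (\<Sum>x<L. kappa x) - s"
    using radii[OF L0, of kappa s] by (elim exE conjE) simp
  have sumr: "(\<Sum>x<L. r x) \<le> card S - s" using r(2) sum_kappa by simp
  have "card (\<Union>x<L. ballset L x (r x)) \<le> (\<Sum>x<L. card (ballset L x (r x)))"
    by (rule card_UN_le) simp
  also have "\<dots> \<le> (\<Sum>x<L. 2 * r x)" by (intro sum_mono card_ballset)
  also have "\<dots> = 2 * (\<Sum>x<L. r x)" by (simp add: sum_distrib_left)
  also have "\<dots> \<le> 2 * (card S - s)" using sumr by simp
  also have "\<dots> < L" using twoN ks L3 by simp
  finally have cardU: "card (\<Union>x<L. ballset L x (r x)) < L" .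
  obtain j0 where j0: "j0 < L" "j0 \<notin> (\<Union>x<L. ballset L x (r x))"
  proof -
    have "\<not> {..<L} \<subseteq> (\<Union>x<L. ballset L x (r x))"
    proof
      assume "{..<L} \<subseteq> (\<Union>x<L. ballset L x (r x))"
      then have "card {..<L} \<le> card (\<Union>x<L. ballset L x (r x))"
        by (intro card_mono) (simp_all add: finite_ballset)
      then show False using cardU by simp
    qed
    then show ?thesis using that by blast
  qed
  interpret cj: core_j V E H C j0 using j0(1) by unfold_locales
  have k0: "0 < k" using ks L3 by simp
  have "is_spanner V E (H - {cj.e0}) k"
  proof (rule spanner_from_edges)
    show "H - {cj.e0} \<subseteq> E" using HE by blast
    show "0 < k" by (rule k0)
    fix u v assume uv: "{u, v} \<in> E"
    have uvV: "u \<in> V" "v \<in> V" using graph_edge[OF assms(1) uv] by auto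
    have "walk E [u, v]" using uv by (simp add: walk_Cons2)
    then have "gdist E u v \<le> enat 1" using gdist_le_walk[of E "[u, v]" u v] by simp
    then have "enat k * gdist E u v \<le> enat k * enat 1" by (intro mult_left_mono) simp_all
    moreover have "gdist H u v \<le> enat k * gdist E u v"
      using assms(3) uvV unfolding is_spanner_def by blast
    ultimately have "gdist H u v \<le> enat k" by (simp add: one_enat_def)
    then obtain P0 where P0: "walk H P0" "hd P0 = u" "last P0 = v" "length P0 - 1 \<le> k"
      using gdist_obtain by (metis)
    show "\<exists>q. walk (H - {cj.e0}) q \<and> hd q = u \<and> last q = v \<and> length q - 1 \<le> k"
      by (rule cj.main_edge[OF j0(2) r(1) ks Sk uv P0])
  qed
  then show ?thesis using cj.e0_cyc by blast
qed

end
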